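(* Let $(G;+)$ be a commutative groupoid and let $M, M'$ be multisets of cardinality $4$ over $G$. Then the deck of $M$ equals the deck of $M'$ if and only if one of the following holds: (i) $M = M'$; (ii) $M = \langle r,s,t,u\rangle$ and $M' = \langle r,s,t,v\rangle$ for some $r,s,t,u,v \in G$ satisfying $x+u = v$ and $x + v = u$ for all $x \in \{r,s,t\}$, and $r+s = s$, $s+t = t$, $t+r = r$.
   Context: A (finite) multiset $M$ over a set $X$ is a function $\mathbf{1}_M \colon X \to \mathbb{N}$ with finite support; $|M| = \sum_x \mathbf{1}_M(x)$ is its cardinality. Multiset sum $\uplus$ adds multiplicities; the difference $M \setminus M'$ has multiplicities $\max(\mathbf{1}_M(x)-\mathbf{1}_{M'}(x),0)$. $\langle x_1,\dots,x_k\rangle$ denotes the multiset in which each element occurs as often as it appears in the list. A commutative groupoid is a set $G$ with a commutative binary operation $+$ (not necessarily associative). Cards and deck: for a multiset $M$ of cardinality $n \geq 2$ over $G$, fix $(m_1,\dots,m_n) \in G^n$ with $M = \langle m_1,\dots,m_n\rangle$; for $I = \{i,j\}$, $1 \le i<j \le n$, the card $M_I$ is $M \setminus \langle m_i, m_j\rangle \uplus \langle m_i + m_j\rangle$. The deck of $M$ is the multiset $\langle M_I : I \rangle$ of all $\binom{n}{2}$ cards (independent of the chosen tuple). *)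

theory Defs
  imports "HOL-Library.Multiset"
begin

text \<open>A commutative groupoid is represented by a carrier type 'a with a binary
operation f (assumed commutative where needed).\<close>

definition card_of :: "('a \<Rightarrow> 'a \<Rightarrow> 'a) \<Rightarrow> 'a list \<Rightarrow> nat \<Rightarrow> nat \<Rightarrow> 'a multiset" where
  "card_of f xs i j = mset xs - {# xs ! i, xs ! j #} + {# f (xs ! i) (xs ! j) #}"

definition deck_list :: "('a \<Rightarrow> 'a \<Rightarrow> 'a) \<Rightarrow> 'a list \<Rightarrow> 'a multiset multiset" where
  "deck_list f xs =
     image_mset (\<lambda>(i, j). card_of f xs i j)
       (mset_set {(i, j). i < j \<and> j < length xs})"

definition deck :: "('a \<Rightarrow> 'a \<Rightarrow> 'a) \<Rightarrow> 'a multiset \<Rightarrow> 'a multiset multiset" where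
  "deck f M = deck_list f (SOME xs. mset xs = M)"

end

theory Submission
  imports Defs
begin

definition DD :: "('a \<Rightarrow> 'a \<Rightarrow> 'a) \<Rightarrow> 'a multiset \<Rightarrow> 'a multiset multiset" where
 "DD f M = sum_mset (image_mset (\<lambda>x. image_mset (\<lambda>y. add_mset (f x y) (M - {#x, y#})) (M - {#x#})) M)"
definition PP :: "('a \<Rightarrow> 'a \<Rightarrow> 'a) \<Rightarrow> 'a multiset \<Rightarrow> 'a multiset" where
 "PP f M = sum_mset (image_mset (\<lambda>x. image_mset (f x) (M - {#x#})) M)"

lemma pairs4: "{(i,j). i<j \<and> j<Suc(Suc(Suc(Suc (0::nat))))} = {(0,1),(0,2),(0,3),(1,2),(1,3),(2,3)}"
  by (auto simp: less_Suc_eq numeral_eq_Suc)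

lemma deck_list4:
  assumes comm: "\<And>x y. f x y = f y x"
  shows "deck_list f [a,b,c,d] + deck_list f [a,b,c,d] = DD f {#a,b,c,d#}"
  unfolding deck_list_def DD_def
  by (simp add: pairs4 card_of_def comm add_mset_commute)

lemma DD_sum:
  "sum_mset (DD f {#a,b,c,d#}) = PP f {#a,b,c,d#} + repeat_mset 6 {#a,b,c,d#}"
  unfolding DD_def PP_def
  by (simp add: add_mset_commute numeral_eq_Suc)


lemma pair2: "{#a,b#} = {#c,d#} \<longleftrightarrow> (a=c\<and>b=d)\<or>(a=d\<and>b=c)"
  by (auto simp: add_eq_conv_diff)

lemma perm3:
  assumes "{#X1,X2,X3#} = {#Y1,Y2,Y3#}"
  shows "(X1=Y1\<and>X2=Y2\<and>X3=Y3) \<or> (X1=Y1\<and>X2=Y3\<and>X3=Y2) \<or> (X1=Y2\<and>X2=Y1\<and>X3=Y3)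
    \<or> (X1=Y2\<and>X2=Y3\<and>X3=Y1) \<or> (X1=Y3\<and>X2=Y1\<and>X3=Y2) \<or> (X1=Y3\<and>X2=Y2\<and>X3=Y1)"
proof -
  have "X1 \<in># {#Y1,Y2,Y3#}" using assms by (metis union_single_eq_member add_mset_add_single)
  then consider "X1 = Y1" | "X1 = Y2" | "X1 = Y3" by auto
  then show ?thesis
  proof cases
    case 1
    then have "{#X2,X3#} = {#Y2,Y3#}" using assms by simp
    then show ?thesis using 1 by (auto simp add: pair2)
  next
    case 2
    then have "{#X2,X3#} = {#Y1,Y3#}" using assms by (simp add: add_mset_commute[of Y1 Y2])
    then show ?thesis using 2 by (auto simp add: pair2)
  next
    case 3
    then have "{#X2,X3#} = {#Y1,Y2#}" using assms by (simp add: add_mset_commute)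
    then show ?thesis using 3 by (auto simp add: pair2)
  qed
qed

lemma labeling:
  assumes comm: "\<And>x y. f x y = f y x"
  and "{#{#f s t, r#},{#f r t, s#},{#f r s,t#}#} = {#{#s,t#},{#r,t#},{#r,s#}#}"
  shows "(f r s = s \<and> f s t = t \<and> f t r = r) \<or> (f s r = r \<and> f r t = t \<and> f t s = s)"
  using perm3[OF assms(2)] unfolding pair2
  using comm[of s r] comm[of t r] comm[of t s] by smt



lemma DD_form:
  assumes comm: "\<And>x y. f x y = f y x"
   and e: "f r u = v" "f s u = v" "f t u = v" "f r v = u" "f s v = u" "f t v = u"
   and PQ: "P = {#{#f s t, r#},{#f r t, s#},{#f r s,t#}#}" "Q = {#{#s,t#},{#r,t#},{#r,s#}#}"
  shows "DD f {#r,s,t,u#} = image_mset (add_mset u) (P + P) + image_mset (add_mset v) (Q + Q)"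
    "DD f {#r,s,t,v#} = image_mset (add_mset v) (P + P) + image_mset (add_mset u) (Q + Q)"
  unfolding DD_def PQ
  by (simp_all add: add_mset_commute e comm[of u] comm[of v] comm[of t s] comm[of t r] comm[of s r])

lemma cancel_disj:
  assumes eq: "image_mset (add_mset u) X + image_mset (add_mset v) Y = image_mset (add_mset v) X + image_mset (add_mset u) Y"
   and uv: "u \<noteq> v" and disj: "\<And>A. count X A = 0 \<or> count Y A = 0"
   and A: "A \<in># X" and mx: "\<And>B. B \<in># X + Y \<Longrightarrow> count B u \<le> count A u"
  shows False
proof -
  have "add_mset u A \<in># image_mset (add_mset u) X + image_mset (add_mset v) Y" using A by simp
  then have "add_mset u A \<in># image_mset (add_mset v) X + image_mset (add_mset u) Y" using eq by simp
  then consider B where "B \<in># X" "add_mset u A = add_mset v B" | B where "B \<in># Y" "add_mset u A = add_mset u B"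
    by auto
  then show False
  proof cases
    case 1
    then have "count (add_mset u A) u = count (add_mset v B) u" by simp
    then have "count B u = Suc (count A u)" using uv by simp
    with mx[of B] 1 show False by simp
  next
    case 2
    then have "A \<in># Y" by simp
    with A disj[of A] show False by (simp add: count_eq_zero_iff)
  qed
qed

lemma cancel_img:
  assumes eq: "image_mset (add_mset u) X + image_mset (add_mset v) Y = image_mset (add_mset v) X + image_mset (add_mset u) Y"
   and uv: "u \<noteq> v"
  shows "X = Y"
proof -
  define X' where "X' = X - Y"
  define Y' where "Y' = Y - X"
  define Z where "Z = X \<inter># Y"
  have XZ: "X = Z + X'" and YZ: "Y = Z + Y'" unfolding X'_def Y'_def Z_def
    by (auto simp: multiset_eq_iff)
  have disj: "\<And>A. count X' A = 0 \<or> count Y' A = 0" unfolding X'_def Y'_def by auto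
  have eq': "image_mset (add_mset u) X' + image_mset (add_mset v) Y' = image_mset (add_mset v) X' + image_mset (add_mset u) Y'"
    using eq unfolding XZ YZ by (simp add: add_ac)
  have "X' + Y' = {#}"
  proof (rule ccontr)
    assume ne: "X' + Y' \<noteq> {#}"
    let ?S = "(\<lambda>B. count B u) ` set_mset (X' + Y')"
    have fin: "finite ?S" by simp
    have "?S \<noteq> {}" using ne by simp
    then have "Max ?S \<in> ?S" by (rule Max_in[OF fin])
    then obtain A where A: "A \<in># X' + Y'" "count A u = Max ?S" by (metis (no_types, lifting) imageE)
    have mx: "\<And>B. B \<in># X' + Y' \<Longrightarrow> count B u \<le> count A u"
      using A(2) fin by (simp add: Max_ge)
    show False
    proof (cases "A \<in># X'")
      case True
      show False by (rule cancel_disj[OF eq' uv disj True mx])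
    next
      case False
      then have yA: "A \<in># Y'" using A by auto
      have mx': "\<And>B. B \<in># Y' + X' \<Longrightarrow> count B u \<le> count A u" using mx by (simp add: add.commute)
      have disj': "\<And>A. count Y' A = 0 \<or> count X' A = 0" using disj by (meson disjE disjI1 disjI2)
      have eq'': "image_mset (add_mset u) Y' + image_mset (add_mset v) X' = image_mset (add_mset v) Y' + image_mset (add_mset u) X'"
        using eq' by (metis add.commute)
      show False by (rule cancel_disj[OF eq'' uv disj' yA mx'])
    qed
  qed
  then show ?thesis using XZ YZ by simp
qed

lemma double_cancel:
  assumes "(A::'b multiset) + A = B + B" shows "A = B"
proof (rule multiset_eqI)
  fix x
  have "count (A + A) x = count (B + B) x" using assms by simp
  then show "count A x = count B x" by simp
qed



lemma PP_form:
  assumes comm: "\<And>x y. f x y = f y x"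
  shows "PP f {#r,s,t,u#} = {#f r s, f r s, f r t, f r t, f s t, f s t#} + {#f r u, f s u, f t u#} + {#f r u, f s u, f t u#}"
  unfolding PP_def by (simp add: add_mset_commute comm[of u] comm[of t s] comm[of t r] comm[of s r])

lemma count3: "count {#a,b,c#} x \<ge> 3 \<Longrightarrow> a=x\<and>b=x\<and>c=x"
  by (auto split: if_splits)

lemma count3le: "count {#a,b,c#} x \<le> 3"
  by (auto split: if_splits)

lemma cnt_lemma:
  assumes "C + U + U + repeat_mset 6 (K + {#u#}) = C + V + V + repeat_mset 6 (K + {#v#})" "u \<noteq> v"
  shows "count U v + count U v = count V v + count V v + 6"
    "count U u + count U u + 6 = count V u + count V u"
proof -
  have "count (C + U + U + repeat_mset 6 (K + {#u#})) v = count (C + V + V + repeat_mset 6 (K + {#v#})) v"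
    by (simp only: assms(1))
  then show "count U v + count U v = count V v + count V v + 6" using assms(2) by simp
  have "count (C + U + U + repeat_mset 6 (K + {#u#})) u = count (C + V + V + repeat_mset 6 (K + {#v#})) u"
    by (simp only: assms(1))
  then show "count U u + count U u + 6 = count V u + count V u" using assms(2) by simp
qed

lemma case1:
  assumes comm: "\<And>x y. f x y = f y x" and uv: "u \<noteq> v"
   and D: "DD f {#r,s,t,u#} = DD f {#r,s,t,v#}"
  shows "(\<forall>x\<in>{r,s,t}. f x u = v \<and> f x v = u) \<and>
     ((f r s = s \<and> f s t = t \<and> f t r = r) \<or> (f s r = r \<and> f r t = t \<and> f t s = s))"
proof -
  let ?C = "{#f r s, f r s, f r t, f r t, f s t, f s t#}"
  let ?U = "{#f r u, f s u, f t u#}" and ?V = "{#f r v, f s v, f t v#}"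
  have "sum_mset (DD f {#r,s,t,u#}) = sum_mset (DD f {#r,s,t,v#})" using D by simp
  then have E: "?C + ?U + ?U + repeat_mset 6 {#r,s,t,u#} = ?C + ?V + ?V + repeat_mset 6 {#r,s,t,v#}"
    unfolding DD_sum PP_form[OF comm] .
  have eqM: "\<And>w. {#r,s,t,w#} = {#r,s,t#} + {#w#}" by simp
  note cl = cnt_lemma[OF E[unfolded eqM] uv]
  from cl(1) have "count ?U v + count ?U v = count ?V v + count ?V v + 6" .
  then have "count ?U v \<ge> 3" by linarith
  then have U3: "f r u = v \<and> f s u = v \<and> f t u = v" by (rule count3)
  then have U: "f r u = v" "f s u = v" "f t u = v" by simp_all
  from cl(2) have "count ?U u + count ?U u + 6 = count ?V u + count ?V u" .
  then have "count ?V u \<ge> 3" using U uv by simp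
  then have V3: "f r v = u \<and> f s v = u \<and> f t v = u" by (rule count3)
  then have V: "f r v = u" "f s v = u" "f t v = u" by simp_all
  let ?P = "{#{#f s t, r#},{#f r t, s#},{#f r s,t#}#}" and ?Q = "{#{#s,t#},{#r,t#},{#r,s#}#}"
  have "image_mset (add_mset u) (?P + ?P) + image_mset (add_mset v) (?Q + ?Q) =
        image_mset (add_mset v) (?P + ?P) + image_mset (add_mset u) (?Q + ?Q)"
    using D unfolding DD_form[OF comm U V refl refl] .
  then have "?P + ?P = ?Q + ?Q" using uv by (rule cancel_img)
  then have "?P = ?Q" by (rule double_cancel)
  then have "(f r s = s \<and> f s t = t \<and> f t r = r) \<or> (f s r = r \<and> f r t = t \<and> f t s = s)"
    by (rule labeling[OF comm])
  then show ?thesis using U V by auto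
qed



lemma mem_PP: "x \<in># M \<Longrightarrow> y \<in># M - {#x#} \<Longrightarrow> f x y \<in># PP f M"
  unfolding PP_def by (auto simp: in_Union_mset_iff)

lemma size4: "size (M::'a multiset) = 4 \<Longrightarrow> \<exists>a b c d. M = {#a,b,c,d#}"
proof -
  assume "size M = 4"
  then obtain xs where "mset xs = M" "length xs = 4" by (metis ex_mset size_mset)
  then show ?thesis by (auto simp: length_Suc_conv numeral_eq_Suc) blast
qed

lemma sub_eq: "(A::'b multiset) \<subseteq># B \<Longrightarrow> size A = size B \<Longrightarrow> A = B"
  using mset_subset_size subset_mset.le_less by fastforce

lemma mainstep:
  assumes s1: "size M = 4" and s2: "size M' = 4" and ne: "M \<noteq> M'"
   and D: "DD f M = DD f M'"
  shows "\<exists>r s t u v. M = {#r,s,t,u#} \<and> M' = {#r,s,t,v#} \<and> u \<noteq> v"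
proof -
  obtain a b c d where M: "M = {#a,b,c,d#}" using size4[OF s1] by blast
  obtain a' b' c' d' where M': "M' = {#a',b',c',d'#}" using size4[OF s2] by blast
  have S: "PP f M + repeat_mset 6 M = PP f M' + repeat_mset 6 M'"
    using arg_cong[OF D, of sum_mset] unfolding M M' DD_sum .
  have sz: "size (PP f M) = 12" "size (PP f M') = 12" unfolding M M' PP_def by simp_all
  define A where "A = M - M'"
  define B where "B = M' - M"
  define K where "K = M \<inter># M'"
  have MK: "M = K + A" and MK': "M' = K + B" unfolding A_def B_def K_def
    by (auto simp: multiset_eq_iff)
  have disj: "\<And>x. count A x = 0 \<or> count B x = 0" unfolding A_def B_def by auto
  have Sc: "\<And>x. count (PP f M) x + 6 * count M x = count (PP f M') x + 6 * count M' x"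
    using S by (metis count_repeat_mset count_union)
  have subA: "repeat_mset 6 A \<subseteq># PP f M'"
    unfolding subseteq_mset_def A_def
  proof
    fix x show "count (repeat_mset 6 (M - M')) x \<le> count (PP f M') x" using Sc[of x] by simp
  qed
  have subB: "repeat_mset 6 B \<subseteq># PP f M"
    unfolding subseteq_mset_def B_def
  proof
    fix x show "count (repeat_mset 6 (M' - M)) x \<le> count (PP f M) x" using Sc[of x] by simp
  qed
  have szA: "6 * size A \<le> 12" using size_mset_mono[OF subA] sz by simp
  have szK: "size K + size A = 4" "size K + size B = 4" using s1 s2 MK MK' by auto
  have "size A \<noteq> 0"
  proof
    assume "size A = 0"
    then have "A = {#}" "B = {#}" using szK by auto
    then show False using ne MK MK' by simp
  qed
  moreover have "size A \<noteq> 2"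
  proof
    assume a2: "size A = 2"
    have eqA: "repeat_mset 6 A = PP f M'"
      using sub_eq[OF subA] sz a2 by simp
    have eqB: "repeat_mset 6 B = PP f M"
      using sub_eq[OF subB] sz a2 szK by simp
    have "size K = 2" using a2 szK by simp
    then obtain k1 k2 where K: "K = {#k1,k2#}"
      by (metis size_eq_Suc_imp_eq_union size_add_mset size_eq_0_iff_empty numeral_2_eq_2 Suc_inject)
    have "f k1 k2 \<in># PP f M" by (rule mem_PP) (simp_all add: MK K)
    then have "0 < count (repeat_mset 6 B) (f k1 k2)" unfolding eqB by simp
    then have "f k1 k2 \<in># B" by simp
    moreover have "f k1 k2 \<in># PP f M'" by (rule mem_PP) (simp_all add: MK' K)
    then have "0 < count (repeat_mset 6 A) (f k1 k2)" unfolding eqA by simp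
    then have "f k1 k2 \<in># A" by simp
    ultimately show False using disj[of "f k1 k2"] by (simp add: count_eq_zero_iff)
  qed
  ultimately have a1: "size A = 1" using szA by linarith
  then obtain u where u: "A = {#u#}" using size_1_singleton_mset by blast
  have "size B = 1" using a1 szK by simp
  then obtain v where v: "B = {#v#}" using size_1_singleton_mset by blast
  have uv: "u \<noteq> v" using disj[of u] u v by auto
  have "size K = 3" using a1 szK by simp
  then obtain r s t where K: "K = {#r,s,t#}"
    by (metis size_eq_Suc_imp_eq_union size_add_mset size_eq_0_iff_empty numeral_3_eq_3 Suc_inject)
  have "M = {#r,s,t,u#}" unfolding MK K u by simp
  moreover have "M' = {#r,s,t,v#}" unfolding MK' K v by simp
  ultimately show ?thesis using uv by blast
qed

lemma len4: "length xs = 4 \<Longrightarrow> \<exists>a b c d. xs = [a,b,c,d]"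
  by (auto simp: length_Suc_conv numeral_eq_Suc)

lemma deck_double:
  assumes comm: "\<And>x y. f x y = f y x" and sz: "size M = 4"
  shows "deck f M + deck f M = DD f M"
proof -
  define xs where "xs = (SOME xs. mset xs = M)"
  have m: "mset xs = M" unfolding xs_def by (rule someI_ex) (rule ex_mset)
  then have "length xs = 4" using sz by (metis size_mset)
  then obtain a b c d where xs: "xs = [a,b,c,d]" using len4 by blast
  have "deck f M = deck_list f xs" unfolding deck_def xs_def ..
  then have "deck f M = deck_list f [a,b,c,d]" using xs by simp
  moreover have "M = {#a,b,c,d#}" using m xs by simp
  ultimately show ?thesis using deck_list4[OF comm] by simp
qed

lemma converse_DD:
  assumes comm: "\<And>x y. f x y = f y x"
   and e: "f r u = v" "f s u = v" "f t u = v" "f r v = u" "f s v = u" "f t v = u"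
   and c: "f r s = s" "f s t = t" "f t r = r"
  shows "DD f {#r,s,t,u#} = DD f {#r,s,t,v#}"
proof -
  have e2: "f u r = v" "f u s = v" "f u t = v" "f v r = u" "f v s = u" "f v t = u"
    using e comm[of u r] comm[of u s] comm[of u t] comm[of v r] comm[of v s] comm[of v t] by simp_all
  have c2: "f s r = s" "f t s = t" "f r t = r" using c comm[of s r] comm[of t s] comm[of r t] by simp_all
  show ?thesis unfolding DD_def by (simp add: e e2 c c2 add_mset_commute)
qed

theorem mainTheorem4:
  fixes f :: "'a \<Rightarrow> 'a \<Rightarrow> 'a" and M M' :: "'a multiset"
  assumes comm: "\<And>x y. f x y = f y x"
    and "size M = 4" and "size M' = 4"
  shows "deck f M = deck f M' \<longleftrightarrow>
    (M = M' \<or>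
     (\<exists>r s t u v. M = {#r, s, t, u#} \<and> M' = {#r, s, t, v#} \<and>
        (\<forall>x \<in> {r, s, t}. f x u = v \<and> f x v = u) \<and>
        f r s = s \<and> f s t = t \<and> f t r = r))" (is "?L \<longleftrightarrow> ?R")
proof -
  have dd: "deck f M = deck f M' \<longleftrightarrow> DD f M = DD f M'"
  proof
    assume "deck f M = deck f M'"
    then show "DD f M = DD f M'"
      using deck_double[of f M, OF comm assms(2)] deck_double[of f M', OF comm assms(3)] by simp
  next
    assume "DD f M = DD f M'"
    then have "deck f M + deck f M = deck f M' + deck f M'"
      using deck_double[of f M, OF comm assms(2)] deck_double[of f M', OF comm assms(3)] by simp
    then show "deck f M = deck f M'" by (rule double_cancel)
  qed
  show ?thesis
  proof
    assume "?L"
    then have D: "DD f M = DD f M'" using dd by simp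
    show ?R
    proof (cases "M = M'")
      case True then show ?thesis by simp
    next
      case False
      then obtain r s t u v where Mr: "M = {#r,s,t,u#}" and Mr': "M' = {#r,s,t,v#}" and uv: "u \<noteq> v"
        using mainstep[OF assms(2,3) False D] by blast
      have c1: "(\<forall>x\<in>{r,s,t}. f x u = v \<and> f x v = u) \<and>
         ((f r s = s \<and> f s t = t \<and> f t r = r) \<or> (f s r = r \<and> f r t = t \<and> f t s = s))"
        using case1[of f u v r s t, OF comm uv] D unfolding Mr Mr' by blast
      then consider "(\<forall>x\<in>{r,s,t}. f x u = v \<and> f x v = u) \<and> f r s = s \<and> f s t = t \<and> f t r = r"
        | "(\<forall>x\<in>{s,r,t}. f x u = v \<and> f x v = u) \<and> f s r = r \<and> f r t = t \<and> f t s = s"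
        by auto
      then show ?thesis
      proof cases
        case 1 then show ?thesis using Mr Mr' by blast
      next
        case 2
        have "M = {#s,r,t,u#}" "M' = {#s,r,t,v#}" using Mr Mr' by (simp_all add: add_mset_commute)
        then show ?thesis using 2 by blast
      qed
    qed
  next
    assume ?R
    then show ?L
    proof
      assume "M = M'" then show ?L by simp
    next
      assume "\<exists>r s t u v. M = {#r, s, t, u#} \<and> M' = {#r, s, t, v#} \<and>
        (\<forall>x \<in> {r, s, t}. f x u = v \<and> f x v = u) \<and>
        f r s = s \<and> f s t = t \<and> f t r = r"
      then obtain r s t u v where Mr: "M = {#r, s, t, u#}" "M' = {#r, s, t, v#}"
        and e: "\<forall>x \<in> {r, s, t}. f x u = v \<and> f x v = u" and c: "f r s = s" "f s t = t" "f t r = r"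
        by blast
      have "DD f M = DD f M'" unfolding Mr
        by (rule converse_DD[of f, OF comm]) (use e c in auto)
      then show ?L using dd by simp
    qed
  qed
qed

end
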